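(* Let $S$ be a quasi-thin scheme on $X$. Then the $\mathbb F$-dimension of the Terwilliger $\mathbb F$-algebra $\mathcal T(y)$ of $S$ with respect to $y$ does not depend on the characteristic of the field $\mathbb F$ nor on the choice of the vertex $y\in X$.
   Context: Let $X$ be a nonempty finite set. A scheme of class $d$ on $X$ is a partition $S=\{R_0,\dots,R_d\}$ of $X\times X$ into nonempty sets such that $R_0=\{(b,b):b\in X\}$; for each $c$ there is $c'$ with $R_{c'}=\{(f,e):(e,f)\in R_c\}$; and for all $i,j,k$ the intersection number $p_{ij}^k=|\{\ell\in X:(m,\ell)\in R_i,(\ell,n)\in R_j\}|$ does not depend on $(m,n)\in R_k$. The valency is $k_a=p_{aa'}^0$; quasi-thin means all $k_a\le 2$. For a field $\mathbb F$ and $y\in X$, $yR_a=\{z:(y,z)\in R_a\}$, $A_a\in M_X(\mathbb F)$ is the $(0,1)$ adjacency matrix of $R_a$, $E_a^*(y)$ is the diagonal $(0,1)$-matrix with ones exactly at positions indexed by $yR_a$, and $\mathcal T(y)$ is the $\mathbb F$-subalgebra of $M_X(\mathbb F)$ generated by $A_0,\dots,A_d,E_0^*(y),\dots,E_d^*(y)$. *)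

theory Defs
  imports Main "HOL-Library.Function_Algebras" "HOL.Vector_Spaces"
begin

definition inter_num :: "('x \<times> 'x) set \<Rightarrow> ('x \<times> 'x) set \<Rightarrow> 'x set \<Rightarrow> 'x \<Rightarrow> 'x \<Rightarrow> nat" where
  "inter_num Ri Rj X m n = card {l \<in> X. (m, l) \<in> Ri \<and> (l, n) \<in> Rj}"

definition is_scheme :: "'x set \<Rightarrow> nat \<Rightarrow> (nat \<Rightarrow> ('x \<times> 'x) set) \<Rightarrow> bool" where
  "is_scheme X d R \<longleftrightarrow>
     finite X \<and> X \<noteq> {} \<and>
     (\<forall>i\<le>d. R i \<noteq> {} \<and> R i \<subseteq> X \<times> X) \<and>
     (\<forall>i\<le>d. \<forall>j\<le>d. i \<noteq> j \<longrightarrow> R i \<inter> R j = {}) \<and>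
     (\<Union>i\<in>{0..d}. R i) = X \<times> X \<and>
     R 0 = {(b, b) | b. b \<in> X} \<and>
     (\<forall>c\<le>d. \<exists>c'\<le>d. R c' = {(f, e). (e, f) \<in> R c}) \<and>
     (\<forall>i\<le>d. \<forall>j\<le>d. \<forall>k\<le>d. \<forall>p\<in>R k. \<forall>q\<in>R k.
        inter_num (R i) (R j) X (fst p) (snd p) = inter_num (R i) (R j) X (fst q) (snd q))"

text \<open>Valency k_a = p_{a a'}^0 where R a' is the converse of R a; evaluated at any (m,m) in R 0.
  Quasi-thin: all valencies at most 2.\<close>

definition quasi_thin :: "'x set \<Rightarrow> nat \<Rightarrow> (nat \<Rightarrow> ('x \<times> 'x) set) \<Rightarrow> bool" where
  "quasi_thin X d R \<longleftrightarrow>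
     (\<forall>a\<le>d. \<forall>a'\<le>d. R a' = {(f, e). (e, f) \<in> R a} \<longrightarrow>
        (\<forall>m\<in>X. inter_num (R a) (R a') X m m \<le> 2))"

text \<open>Matrices in M_X(F), represented as functions X \<Rightarrow> X \<Rightarrow> F (zero outside X \<times> X).\<close>

definition mscale :: "'a::field \<Rightarrow> ('x \<Rightarrow> 'x \<Rightarrow> 'a) \<Rightarrow> ('x \<Rightarrow> 'x \<Rightarrow> 'a)" where
  "mscale c M = (\<lambda>u v. c * M u v)"

definition mprod :: "'x set \<Rightarrow> ('x \<Rightarrow> 'x \<Rightarrow> 'a::field) \<Rightarrow> ('x \<Rightarrow> 'x \<Rightarrow> 'a) \<Rightarrow> ('x \<Rightarrow> 'x \<Rightarrow> 'a)" where
  "mprod X M N = (\<lambda>u v. \<Sum>w\<in>X. M u w * N w v)"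

definition adj_mat :: "('x \<times> 'x) set \<Rightarrow> ('x \<Rightarrow> 'x \<Rightarrow> 'a::field)" where
  "adj_mat Ra = (\<lambda>u v. if (u, v) \<in> Ra then 1 else 0)"

definition dual_idem :: "('x \<times> 'x) set \<Rightarrow> 'x \<Rightarrow> ('x \<Rightarrow> 'x \<Rightarrow> 'a::field)" where
  "dual_idem Ra y = (\<lambda>u v. if u = v \<and> (y, u) \<in> Ra then 1 else 0)"

text \<open>The F-subalgebra of M_X(F) generated by a set G of matrices (supported on X \<times> X).
  It contains the identity since A_0 is the identity of M_X(F).\<close>

inductive_set gen_alg :: "'x set \<Rightarrow> ('x \<Rightarrow> 'x \<Rightarrow> 'a::field) set \<Rightarrow> ('x \<Rightarrow> 'x \<Rightarrow> 'a) set"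
  for X :: "'x set" and G :: "('x \<Rightarrow> 'x \<Rightarrow> 'a) set" where
  gen: "M \<in> G \<Longrightarrow> M \<in> gen_alg X G"
| zero: "(\<lambda>u v. 0) \<in> gen_alg X G"
| one: "(\<lambda>u v. if u = v \<and> u \<in> X then 1 else 0) \<in> gen_alg X G"
| add: "M \<in> gen_alg X G \<Longrightarrow> N \<in> gen_alg X G \<Longrightarrow> (\<lambda>u v. M u v + N u v) \<in> gen_alg X G"
| smult: "M \<in> gen_alg X G \<Longrightarrow> mscale c M \<in> gen_alg X G"
| mult: "M \<in> gen_alg X G \<Longrightarrow> N \<in> gen_alg X G \<Longrightarrow> mprod X M N \<in> gen_alg X G"

definition terwilliger_alg :: "'x set \<Rightarrow> nat \<Rightarrow> (nat \<Rightarrow> ('x \<times> 'x) set) \<Rightarrow> 'x \<Rightarrow> ('x \<Rightarrow> 'x \<Rightarrow> 'a::field) set" where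
  "terwilliger_alg X d R y =
     gen_alg X ((\<lambda>a. adj_mat (R a)) ` {0..d} \<union> (\<lambda>a. dual_idem (R a) y) ` {0..d})"

end

theory Submission
  imports Defs
begin

lemma sum_fun_apply: "(sum F A) x = (\<Sum>i\<in>A. F i x)"
  by (induction A rule: infinite_finite_induct) auto

interpretation mv: vector_space "mscale :: 'a::field \<Rightarrow> ('x \<Rightarrow> 'x \<Rightarrow> 'a) \<Rightarrow> _"
  by unfold_locales (auto simp: mscale_def fun_eq_iff algebra_simps)


locale qts =
  fixes X :: "'x set" and d :: nat and R :: "nat \<Rightarrow> ('x \<times> 'x) set"
  assumes sch: "is_scheme X d R" and qt: "quasi_thin X d R"
begin

lemma finX: "finite X" using sch by (simp add: is_scheme_def)
lemma R_sub: "i \<le> d \<Longrightarrow> R i \<subseteq> X \<times> X" using sch by (simp add: is_scheme_def)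
lemma R_ne: "i \<le> d \<Longrightarrow> R i \<noteq> {}" using sch by (simp add: is_scheme_def)
lemma R_disj: "i \<le> d \<Longrightarrow> j \<le> d \<Longrightarrow> p \<in> R i \<Longrightarrow> p \<in> R j \<Longrightarrow> i = j"
  using sch unfolding is_scheme_def by blast
lemma R_cover: "u \<in> X \<Longrightarrow> v \<in> X \<Longrightarrow> \<exists>i\<le>d. (u,v) \<in> R i"
proof -
  assume "u \<in> X" "v \<in> X"
  then have "(u,v) \<in> (\<Union>i\<in>{0..d}. R i)" using sch by (simp add: is_scheme_def)
  then show ?thesis by auto
qed
lemma R0: "R 0 = {(b, b) | b. b \<in> X}" using sch by (simp add: is_scheme_def)
lemma inum_const:
  assumes "i \<le> d" "j \<le> d" "k \<le> d" "(m,n) \<in> R k" "(m',n') \<in> R k"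
  shows "inter_num (R i) (R j) X m n = inter_num (R i) (R j) X m' n'"
proof -
  have "\<forall>p\<in>R k. \<forall>q\<in>R k. inter_num (R i) (R j) X (fst p) (snd p) = inter_num (R i) (R j) X (fst q) (snd q)"
    using sch assms(1-3) unfolding is_scheme_def by blast
  from this[rule_format, OF assms(4) assms(5)] show ?thesis by simp
qed

definition cv :: "nat \<Rightarrow> nat" where
  "cv c = (SOME c'. c' \<le> d \<and> R c' = {(f, e). (e, f) \<in> R c})"

lemma cv: "c \<le> d \<Longrightarrow> cv c \<le> d \<and> R (cv c) = {(f, e). (e, f) \<in> R c}"
  unfolding cv_def by (rule someI_ex) (use sch in \<open>auto simp: is_scheme_def\<close>)

lemma cv_le: "c \<le> d \<Longrightarrow> cv c \<le> d" using cv by blast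
lemma cv_mem: "c \<le> d \<Longrightarrow> (u,v) \<in> R (cv c) \<longleftrightarrow> (v,u) \<in> R c" using cv by blast

definition C :: "'x \<Rightarrow> nat \<Rightarrow> 'x set" where
  "C y a = {u \<in> X. (y,u) \<in> R a}"

lemma C_sub: "C y a \<subseteq> X" by (auto simp: C_def)
lemma C_fin: "finite (C y a)" using finX C_sub finite_subset by blast
lemma C_mem: "a \<le> d \<Longrightarrow> u \<in> C y a \<longleftrightarrow> (y,u) \<in> R a"
  using R_sub by (auto simp: C_def)

lemma C_disj: "a \<le> d \<Longrightarrow> b \<le> d \<Longrightarrow> u \<in> C y a \<Longrightarrow> u \<in> C y b \<Longrightarrow> a = b"
  using R_disj by (auto simp: C_def)

lemma C_ex: "y \<in> X \<Longrightarrow> u \<in> X \<Longrightarrow> \<exists>a\<le>d. u \<in> C y a"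
  using R_cover by (auto simp: C_def)

lemma card_C: "y \<in> X \<Longrightarrow> a \<le> d \<Longrightarrow> card (C y a) = inter_num (R a) (R (cv a)) X y y"
  unfolding inter_num_def C_def using cv_mem by (intro arg_cong[where f=card]) auto

lemma card_C_indep: "y \<in> X \<Longrightarrow> y' \<in> X \<Longrightarrow> a \<le> d \<Longrightarrow> card (C y a) = card (C y' a)"
  using card_C inum_const[of a "cv a" 0 y y y' y'] cv_le R0 by auto

lemma card_C_le2: assumes "y \<in> X" "a \<le> d" shows "card (C y a) \<le> 2"
proof -
  have "\<forall>a'\<le>d. R a' = {(f, e). (e, f) \<in> R a} \<longrightarrow> (\<forall>m\<in>X. inter_num (R a) (R a') X m m \<le> 2)"
    using qt assms(2) unfolding quasi_thin_def by blast
  from this[rule_format, OF cv_le[OF assms(2)] conjunct2[OF cv[OF assms(2)]] assms(1)]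
  show ?thesis using card_C[OF assms] by simp
qed

lemma C_ne: assumes "y \<in> X" "a \<le> d" shows "C y a \<noteq> {}"
proof -
  obtain p q where pq: "(p,q) \<in> R a" using R_ne[OF assms(2)] by auto
  then have pX: "p \<in> X" using R_sub assms(2) by blast
  have "q \<in> C p a" using pq R_sub assms(2) by (auto simp: C_def)
  then have "card (C p a) \<noteq> 0" using C_fin by auto
  then show ?thesis using card_C_indep[OF assms(1) pX assms(2)] by auto
qed

lemma card_C_ge1: "y \<in> X \<Longrightarrow> a \<le> d \<Longrightarrow> card (C y a) \<ge> 1"
  using C_ne C_fin by (simp add: Suc_le_eq card_gt_0_iff)

end


context qts begin

lemma C_conv: "a \<le> d \<Longrightarrow> u \<in> C y a \<Longrightarrow> (u,y) \<in> R (cv a)"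
  using cv_mem C_mem by blast

lemma rowc: "b \<le> d \<Longrightarrow> card {v \<in> C y b. (u,v) \<in> R c} = inter_num (R c) (R (cv b)) X u y"
proof -
  assume b: "b \<le> d"
  have "{l \<in> X. (u, l) \<in> R c \<and> (l, y) \<in> R (cv b)} = {v \<in> C y b. (u,v) \<in> R c}"
    by (auto simp: C_def cv_mem[OF b])
  then show ?thesis by (simp add: inter_num_def)
qed

lemma colc: "card {u \<in> C y a. (u,v) \<in> R c} = inter_num (R a) (R c) X y v"
proof -
  have "{l \<in> X. (y, l) \<in> R a \<and> (l, v) \<in> R c} = {u \<in> C y a. (u,v) \<in> R c}"
    by (auto simp: C_def)
  then show ?thesis by (simp add: inter_num_def)
qed

lemma rowc_indep:
  assumes "a \<le> d" "b \<le> d" "c \<le> d" "u \<in> C y a" "u' \<in> C y' a"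
  shows "card {v \<in> C y b. (u,v) \<in> R c} = card {v \<in> C y' b. (u',v) \<in> R c}"
  using rowc[OF assms(2)] inum_const[OF assms(3) cv_le[OF assms(2)] cv_le[OF assms(1)]
      C_conv[OF assms(1,4)] C_conv[OF assms(1,5)]] by simp

lemma colc_indep:
  assumes "a \<le> d" "b \<le> d" "c \<le> d" "v \<in> C y b" "v' \<in> C y' b"
  shows "card {u \<in> C y a. (u,v) \<in> R c} = card {u \<in> C y' a. (u,v') \<in> R c}"
proof -
  have "(y,v) \<in> R b" "(y',v') \<in> R b" using assms(2,4,5) C_mem by auto
  then show ?thesis unfolding colc using inum_const[OF assms(1) assms(3) assms(2)] by blast
qed

definition edge :: "'x \<Rightarrow> nat \<Rightarrow> nat \<Rightarrow> bool" where
  "edge y a b = (\<exists>c\<le>d. (\<forall>u\<in>C y a. card {v \<in> C y b. (u,v) \<in> R c} = 1) \<and>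
                         (\<forall>v\<in>C y b. card {u \<in> C y a. (u,v) \<in> R c} = 1))"

lemma edge_indep:
  assumes "y \<in> X" "y' \<in> X" "a \<le> d" "b \<le> d" "edge y a b"
  shows "edge y' a b"
proof -
  obtain c where c: "c \<le> d" "\<forall>u\<in>C y a. card {v \<in> C y b. (u,v) \<in> R c} = 1"
    "\<forall>v\<in>C y b. card {u \<in> C y a. (u,v) \<in> R c} = 1"
    using assms(5) unfolding edge_def by blast
  obtain u0 where u0: "u0 \<in> C y a" using C_ne[OF assms(1,3)] by blast
  obtain v0 where v0: "v0 \<in> C y b" using C_ne[OF assms(1,4)] by blast
  have "\<forall>u\<in>C y' a. card {v \<in> C y' b. (u,v) \<in> R c} = 1"
  proof
    fix u assume u: "u \<in> C y' a"
    show "card {v \<in> C y' b. (u,v) \<in> R c} = 1"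
      using rowc_indep[OF assms(3,4) c(1) u0 u] c(2) u0 by simp
  qed
  moreover have "\<forall>v\<in>C y' b. card {u \<in> C y' a. (u,v) \<in> R c} = 1"
  proof
    fix v assume v: "v \<in> C y' b"
    show "card {u \<in> C y' a. (u,v) \<in> R c} = 1"
      using colc_indep[OF assms(3,4) c(1) v0 v] c(3) v0 by simp
  qed
  ultimately show ?thesis using c(1) unfolding edge_def by blast
qed

definition Gr :: "'x set \<Rightarrow> ('x \<Rightarrow> 'x) \<Rightarrow> ('x \<times> 'x) set" where
  "Gr A f = {(u, f u) | u. u \<in> A}"

lemma edge_bij:
  assumes c: "c \<le> d" "\<forall>u\<in>C y a. card {v \<in> C y b. (u,v) \<in> R c} = 1"
    "\<forall>v\<in>C y b. card {u \<in> C y a. (u,v) \<in> R c} = 1"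
  shows "\<exists>f. bij_betw f (C y a) (C y b) \<and> R c \<inter> (C y a \<times> C y b) = Gr (C y a) f"
proof -
  define f where "f u = (THE v. v \<in> C y b \<and> (u,v) \<in> R c)" for u
  have fu: "{v \<in> C y b. (u,v) \<in> R c} = {f u}" if uu: "u \<in> C y a" for u
  proof -
    obtain w where w: "{v \<in> C y b. (u,v) \<in> R c} = {w}"
      using c(2) uu by (meson card_1_singletonE)
    then have "f u = w" unfolding f_def by (intro the_equality) auto
    then show ?thesis using w by simp
  qed
  have inj: "inj_on f (C y a)"
  proof (rule inj_onI)
    fix u1 u2 assume u: "u1 \<in> C y a" "u2 \<in> C y a" "f u1 = f u2"
    let ?v = "f u1"
    have v: "?v \<in> C y b" "(u1, ?v) \<in> R c" "(u2, ?v) \<in> R c"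
      using fu[OF u(1)] fu[OF u(2)] u(3) by blast+
    obtain z where z: "{u \<in> C y a. (u, ?v) \<in> R c} = {z}"
      using c(3) v(1) by (meson card_1_singletonE)
    have "u1 \<in> {u \<in> C y a. (u, ?v) \<in> R c}" "u2 \<in> {u \<in> C y a. (u, ?v) \<in> R c}"
      using u v by auto
    then show "u1 = u2" unfolding z by simp
  qed
  have img: "f ` C y a = C y b"
  proof
    show "f ` C y a \<subseteq> C y b" using fu by blast
    show "C y b \<subseteq> f ` C y a"
    proof
      fix v assume v: "v \<in> C y b"
      obtain z where z: "{u \<in> C y a. (u, v) \<in> R c} = {z}"
        using c(3) v by (meson card_1_singletonE)
      then have "z \<in> C y a" "(z,v) \<in> R c" by auto
      then have "v = f z" using fu v by blast
      then show "v \<in> f ` C y a" using \<open>z \<in> C y a\<close> by blast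
    qed
  qed
  have "R c \<inter> (C y a \<times> C y b) = Gr (C y a) f"
    unfolding Gr_def using fu by blast
  then show ?thesis using inj img unfolding bij_betw_def by blast
qed

definition E :: "'x \<Rightarrow> (nat \<times> nat) set" where
  "E y = {(a,b). a \<le> d \<and> b \<le> d \<and> edge y a b}"

lemma E_indep: "y \<in> X \<Longrightarrow> y' \<in> X \<Longrightarrow> E y = E y'"
  unfolding E_def using edge_indep by blast

lemma E_card: assumes "(a,b) \<in> E y" shows "card (C y a) = card (C y b)"
proof -
  obtain c where c: "c \<le> d" "\<forall>u\<in>C y a. card {v \<in> C y b. (u,v) \<in> R c} = 1"
    "\<forall>v\<in>C y b. card {u \<in> C y a. (u,v) \<in> R c} = 1"
    using assms unfolding E_def edge_def by blast
  obtain f where "bij_betw f (C y a) (C y b)" using edge_bij[OF c] by blast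
  then show ?thesis by (rule bij_betw_same_card)
qed

lemma Es_card: "(a,b) \<in> (E y)\<^sup>* \<Longrightarrow> card (C y a) = card (C y b)"
  by (induction rule: rtrancl_induct) (auto dest: E_card)

lemma Es_le: "(a,b) \<in> (E y)\<^sup>* \<Longrightarrow> a \<le> d \<Longrightarrow> b \<le> d"
  by (induction rule: rtrancl_induct) (auto simp: E_def)

definition dl :: "'x \<Rightarrow> nat \<Rightarrow> nat \<Rightarrow> bool" where
  "dl y a b = ((a,b) \<in> (E y)\<^sup>* \<and> card (C y a) = 2)"

definition Idx :: "'x \<Rightarrow> (nat \<times> nat \<times> bool) set" where
  "Idx y = {(a,b,t). a \<le> d \<and> b \<le> d \<and> (t \<longrightarrow> dl y a b)}"

lemma dl_indep: "y \<in> X \<Longrightarrow> y' \<in> X \<Longrightarrow> a \<le> d \<Longrightarrow> dl y a b = dl y' a b"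
  unfolding dl_def using E_indep card_C_indep by metis

lemma Idx_indep: assumes "y \<in> X" "y' \<in> X" shows "Idx y = Idx y'"
  unfolding Idx_def using dl_indep[OF assms] by blast

lemma Idx_fin: "finite (Idx y)"
proof -
  have "Idx y \<subseteq> {..d} \<times> {..d} \<times> UNIV" unfolding Idx_def by auto
  then show ?thesis by (rule finite_subset) auto
qed

lemma dl_card2: "dl y a b \<Longrightarrow> card (C y a) = 2 \<and> card (C y b) = 2"
  unfolding dl_def using Es_card by metis

lemma dl_trans: "dl y a b \<Longrightarrow> dl y b c \<Longrightarrow> dl y a c"
  unfolding dl_def by auto

end


lemma adj_mat_app: "adj_mat S u v = (if (u,v) \<in> S then 1 else 0)"
  by (simp add: adj_mat_def)

lemma adj_mat_inj: "inj (adj_mat :: ('x \<times> 'x) set \<Rightarrow> 'x \<Rightarrow> 'x \<Rightarrow> 'a::field)"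
proof (rule injI)
  fix S S' :: "('x \<times> 'x) set"
  assume h: "(adj_mat S :: 'x \<Rightarrow> 'x \<Rightarrow> 'a) = adj_mat S'"
  show "S = S'"
  proof (rule set_eqI)
    fix p :: "'x \<times> 'x"
    obtain u v where p: "p = (u,v)" by (cases p)
    have "(adj_mat S u v :: 'a) = adj_mat S' u v" using h by simp
    then show "p \<in> S \<longleftrightarrow> p \<in> S'" unfolding p adj_mat_def by (auto split: if_splits)
  qed
qed

lemma adj_mat_empty: "adj_mat {} = 0"
  by (simp add: adj_mat_def fun_eq_iff)

lemma adj_mat_union: "S \<inter> S' = {} \<Longrightarrow> adj_mat (S \<union> S') = adj_mat S + adj_mat S'"
  by (auto simp: adj_mat_def fun_eq_iff)

lemma adj_mat_diff: "S' \<subseteq> S \<Longrightarrow> adj_mat (S - S') = adj_mat S - adj_mat S'"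
  by (auto simp: adj_mat_def fun_eq_iff)

lemma sum_if_card: "finite A \<Longrightarrow> (\<Sum>w\<in>A. if P w then (1::'a::semiring_1) else 0) = of_nat (card {w \<in> A. P w})"
  by (simp add: sum.inter_filter[symmetric])

lemma mprod_adj: "finite X \<Longrightarrow>
  mprod X (adj_mat S1) (adj_mat S2) u v = (of_nat (card {w \<in> X. (u,w) \<in> S1 \<and> (w,v) \<in> S2}) :: 'a::field)"
proof -
  assume fin: "finite X"
  have "mprod X (adj_mat S1) (adj_mat S2) u v = (\<Sum>w\<in>X. if (u,w) \<in> S1 \<and> (w,v) \<in> S2 then (1::'a) else 0)"
    unfolding mprod_def adj_mat_def by (intro sum.cong) auto
  then show ?thesis using sum_if_card[OF fin] by simp
qed

lemma mprod_adj_eq: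
  assumes "finite X" "\<And>u v. card {w \<in> X. (u,w) \<in> S1 \<and> (w,v) \<in> S2} = (if (u,v) \<in> S3 then 1 else 0)"
  shows "mprod X (adj_mat S1) (adj_mat S2) = (adj_mat S3 :: 'x \<Rightarrow> 'x \<Rightarrow> 'a::field)"
proof (intro ext)
  fix u v
  show "mprod X (adj_mat S1) (adj_mat S2) u v = (adj_mat S3 u v :: 'a)"
    unfolding mprod_adj[OF assms(1)] assms(2) by (simp add: adj_mat_app)
qed

lemma mprod_add_left: "mprod X (M + N) P = mprod X M P + mprod X N P"
  by (simp add: mprod_def fun_eq_iff algebra_simps sum.distrib)
lemma mprod_add_right: "mprod X P (M + N) = mprod X P M + mprod X P N"
  by (simp add: mprod_def fun_eq_iff algebra_simps sum.distrib)
lemma mprod_scale_left: "mprod X (mscale c M) P = mscale c (mprod X M P)"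
  by (simp add: mprod_def mscale_def fun_eq_iff algebra_simps sum_distrib_left)
lemma mprod_scale_right: "mprod X P (mscale c M) = mscale c (mprod X P M)"
  by (simp add: mprod_def mscale_def fun_eq_iff algebra_simps sum_distrib_left)
lemma mprod_zero_left: "mprod X 0 P = 0"
  by (simp add: mprod_def fun_eq_iff)
lemma mprod_zero_right: "mprod X P 0 = 0"
  by (simp add: mprod_def fun_eq_iff)

lemma span_mprod_closed:
  fixes G :: "('x \<Rightarrow> 'x \<Rightarrow> 'a::field) set"
  assumes G: "\<And>x z. x \<in> G \<Longrightarrow> z \<in> G \<Longrightarrow> mprod X x z \<in> mv.span G"
    and x: "x \<in> mv.span G" and z: "z \<in> mv.span G"
  shows "mprod X x z \<in> mv.span G"
proof -
  have sub1: "mv.subspace {a. mprod X x' a \<in> mv.span G}" for x'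
    by (rule mv.subspaceI) (simp_all add: mprod_zero_right mprod_add_right mprod_scale_right mv.span_zero mv.span_add mv.span_scale)
  have sub2: "mv.subspace {a. mprod X a z \<in> mv.span G}"
    by (rule mv.subspaceI) (simp_all add: mprod_zero_left mprod_add_left mprod_scale_left mv.span_zero mv.span_add mv.span_scale)
  have base: "mprod X x z \<in> mv.span G" if xG: "x \<in> G" for x
    using z
  proof (induction rule: mv.span_induct)
    case base
    show ?case using sub1 by simp
  next
    case (step z')
    then show ?case using G[OF xG] by simp
  qed
  from x show ?thesis
  proof (induction rule: mv.span_induct)
    case base
    show ?case using sub2 by simp
  next
    case (step x')
    then show ?case using base by simp
  qed
qed

lemma indep_adj:
  fixes SS :: "('x \<times> 'x) set set"
  assumes fin: "finite SS" and ne: "\<And>S. S \<in> SS \<Longrightarrow> S \<noteq> {}"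
    and disj: "\<And>S S'. S \<in> SS \<Longrightarrow> S' \<in> SS \<Longrightarrow> S \<noteq> S' \<Longrightarrow> S \<inter> S' = {}"
  shows "mv.independent ((adj_mat :: _ \<Rightarrow> 'x \<Rightarrow> 'x \<Rightarrow> 'a::field) ` SS)"
proof
  assume "mv.dependent ((adj_mat :: _ \<Rightarrow> 'x \<Rightarrow> 'x \<Rightarrow> 'a::field) ` SS)"
  then obtain c where c: "\<exists>v\<in>adj_mat ` SS. c v \<noteq> 0"
    "(\<Sum>v\<in>(adj_mat :: _ \<Rightarrow> 'x \<Rightarrow> 'x \<Rightarrow> 'a) ` SS. mscale (c v) v) = 0"
    using mv.dependent_finite[of "(adj_mat :: _ \<Rightarrow> 'x \<Rightarrow> 'x \<Rightarrow> 'a) ` SS"] fin by auto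
  obtain S0 where S0: "S0 \<in> SS" "c (adj_mat S0) \<noteq> 0" using c(1) by auto
  obtain u v where uv: "(u,v) \<in> S0" using ne[OF S0(1)] by auto
  have "(\<Sum>S\<in>SS. mscale (c (adj_mat S)) (adj_mat S :: 'x \<Rightarrow> 'x \<Rightarrow> 'a)) = 0"
    using c(2) by (simp add: sum.reindex[OF inj_on_subset[OF adj_mat_inj subset_UNIV]])
  then have "(\<Sum>S\<in>SS. mscale (c (adj_mat S)) (adj_mat S :: 'x \<Rightarrow> 'x \<Rightarrow> 'a)) u v = 0" by simp
  then have "(\<Sum>S\<in>SS. c (adj_mat S) * (if (u,v) \<in> S then 1 else 0)) = 0"
    by (simp add: sum_fun_apply mscale_def adj_mat_def)
  moreover have "(\<Sum>S\<in>SS. c (adj_mat S) * (if (u,v) \<in> S then 1 else 0)) =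
      (\<Sum>S\<in>SS. if S = S0 then c (adj_mat S0) else 0)"
    using disj S0(1) uv by (intro sum.cong) auto
  ultimately show False using S0 fin by simp
qed



context qts begin

definition rp :: "'x \<Rightarrow> nat \<Rightarrow> 'x" where "rp y a = (SOME u. u \<in> C y a)"

lemma rp_in: "y \<in> X \<Longrightarrow> a \<le> d \<Longrightarrow> rp y a \<in> C y a"
  unfolding rp_def using C_ne by (metis some_in_eq)

lemma two_cell: assumes "y \<in> X" "a \<le> d" "card (C y a) = 2"
  shows "\<exists>z. z \<noteq> rp y a \<and> C y a = {rp y a, z}"
proof -
  obtain p q where pq: "p \<noteq> q" "C y a = {p, q}" using assms(3) by (meson card_2_iff)
  have r: "rp y a \<in> {p,q}" using rp_in[OF assms(1,2)] pq by simp
  show ?thesis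
  proof (cases "rp y a = p")
    case True
    then show ?thesis using pq by (intro exI[of _ q]) auto
  next
    case False
    then show ?thesis using pq r by (intro exI[of _ p]) auto
  qed
qed

lemma one_cell: assumes "card (C y a) = 1" shows "C y a = {rp y a}"
proof -
  obtain p where "C y a = {p}" using assms by (meson card_1_singletonE)
  then show ?thesis unfolding rp_def by simp
qed

lemma card12: "y \<in> X \<Longrightarrow> a \<le> d \<Longrightarrow> card (C y a) = 1 \<or> card (C y a) = 2"
  using card_C_le2 card_C_ge1 by force

definition Jset :: "'x \<Rightarrow> nat \<Rightarrow> nat \<Rightarrow> ('x \<times> 'x) set" where
  "Jset y a b = C y a \<times> C y b"

definition Dset :: "'x \<Rightarrow> nat \<Rightarrow> nat \<Rightarrow> ('x \<times> 'x) set" where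
  "Dset y a b = {(u,v). u \<in> C y a \<and> v \<in> C y b \<and> (u = rp y a \<longleftrightarrow> v = rp y b)}"

lemma Dset_sub: "Dset y a b \<subseteq> Jset y a b" by (auto simp: Dset_def Jset_def)

lemma Jset_sub: "Jset y a b \<subseteq> X \<times> X" using C_sub by (auto simp: Jset_def)

lemma Jset_disj: "a \<le> d \<Longrightarrow> b \<le> d \<Longrightarrow> a' \<le> d \<Longrightarrow> b' \<le> d \<Longrightarrow> (a,b) \<noteq> (a',b') \<Longrightarrow>
   Jset y a b \<inter> Jset y a' b' = {}"
  using C_disj by (auto simp: Jset_def)


lemma T_sub: "mv.subspace (terwilliger_alg X d R y)"
proof (rule mv.subspaceI)
  show "0 \<in> terwilliger_alg X d R y" unfolding terwilliger_alg_def zero_fun_def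
    by (rule gen_alg.zero)
  show "x + z \<in> terwilliger_alg X d R y" if xz: "x \<in> terwilliger_alg X d R y" "z \<in> terwilliger_alg X d R y" for x z
  proof -
    have "x + z = (\<lambda>u v. x u v + z u v)" by (simp add: fun_eq_iff)
    then show ?thesis using gen_alg.add[OF xz[unfolded terwilliger_alg_def]] unfolding terwilliger_alg_def by simp
  qed
  show "mscale c x \<in> terwilliger_alg X d R y" if xx: "x \<in> terwilliger_alg X d R y" for c x
    using gen_alg.smult[OF xx[unfolded terwilliger_alg_def]] unfolding terwilliger_alg_def by simp
qed

lemma T_mult: "x \<in> terwilliger_alg X d R y \<Longrightarrow> z \<in> terwilliger_alg X d R y \<Longrightarrow> mprod X x z \<in> terwilliger_alg X d R y"
  unfolding terwilliger_alg_def by (rule gen_alg.mult)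

lemma T_adj: "c \<le> d \<Longrightarrow> adj_mat (R c) \<in> terwilliger_alg X d R y"
  unfolding terwilliger_alg_def by (rule gen_alg.gen) auto

lemma dual_idem_eq: "a \<le> d \<Longrightarrow> dual_idem (R a) y = adj_mat (Id_on (C y a))"
  unfolding dual_idem_def adj_mat_def fun_eq_iff Id_on_def using C_mem by auto

lemma T_E: "a \<le> d \<Longrightarrow> adj_mat (Id_on (C y a)) \<in> terwilliger_alg X d R y"
  unfolding terwilliger_alg_def dual_idem_eq[symmetric] by (rule gen_alg.gen) auto

lemma T_sum: "finite I \<Longrightarrow> (\<And>i. i \<in> I \<Longrightarrow> F i \<in> terwilliger_alg X d R y) \<Longrightarrow> sum F I \<in> terwilliger_alg X d R y"
  using mv.subspace_sum[OF T_sub] by blast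

lemma full_sum: "(adj_mat (X \<times> X) :: 'x \<Rightarrow> 'x \<Rightarrow> 'a::field) = (\<Sum>c\<in>{..d}. adj_mat (R c))"
proof (intro ext)
  fix u v
  show "(adj_mat (X \<times> X) :: 'x \<Rightarrow> 'x \<Rightarrow> 'a::field) u v = (\<Sum>c\<in>{..d}. adj_mat (R c)) u v"
  proof (cases "u \<in> X \<and> v \<in> X")
    case True
    then obtain c0 where c0: "c0 \<le> d" "(u,v) \<in> R c0" using R_cover by blast
    have "(\<Sum>c\<in>{..d}. (adj_mat (R c) :: 'x \<Rightarrow> 'x \<Rightarrow> 'a::field)) u v = (\<Sum>c\<in>{..d}. if c = c0 then 1 else 0)"
      unfolding sum_fun_apply using R_disj c0 by (intro sum.cong) (auto simp: adj_mat_app)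
    then show ?thesis using True c0 by (simp add: adj_mat_app)
  next
    case False
    then have "\<forall>c\<in>{..d}. (u,v) \<notin> R c" using R_sub by blast
    then show ?thesis using False by (simp add: adj_mat_app sum_fun_apply)
  qed
qed

lemma T_full: "adj_mat (X \<times> X) \<in> terwilliger_alg X d R y"
  unfolding full_sum by (rule T_sum) (auto intro: T_adj)

lemma blk_left: "A \<subseteq> X \<Longrightarrow> mprod X (adj_mat (Id_on A)) (adj_mat S) = (adj_mat {(u,v) \<in> S. u \<in> A} :: 'x \<Rightarrow> 'x \<Rightarrow> 'a::field)"
proof (rule mprod_adj_eq[OF finX])
  fix u v assume A: "A \<subseteq> X"
  have "{w \<in> X. (u, w) \<in> Id_on A \<and> (w, v) \<in> S} = (if (u,v) \<in> {(u,v) \<in> S. u \<in> A} then {u} else {})"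
    using A by auto
  then show "card {w \<in> X. (u, w) \<in> Id_on A \<and> (w, v) \<in> S} = (if (u,v) \<in> {(u,v) \<in> S. u \<in> A} then 1 else 0)"
    by simp
qed

lemma blk_right: "B \<subseteq> X \<Longrightarrow> mprod X (adj_mat S) (adj_mat (Id_on B)) = (adj_mat {(u,v) \<in> S. v \<in> B} :: 'x \<Rightarrow> 'x \<Rightarrow> 'a::field)"
proof (rule mprod_adj_eq[OF finX])
  fix u v assume B: "B \<subseteq> X"
  have "{w \<in> X. (u, w) \<in> S \<and> (w, v) \<in> Id_on B} = (if (u,v) \<in> {(u,v) \<in> S. v \<in> B} then {v} else {})"
    using B by auto
  then show "card {w \<in> X. (u, w) \<in> S \<and> (w, v) \<in> Id_on B} = (if (u,v) \<in> {(u,v) \<in> S. v \<in> B} then 1 else 0)"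
    by simp
qed

lemma T_blk: assumes "a \<le> d" "b \<le> d" "(adj_mat S :: 'x \<Rightarrow> 'x \<Rightarrow> 'a::field) \<in> terwilliger_alg X d R y"
  shows "(adj_mat (S \<inter> Jset y a b) :: 'x \<Rightarrow> 'x \<Rightarrow> 'a) \<in> terwilliger_alg X d R y"
proof -
  have "(mprod X (mprod X (adj_mat (Id_on (C y a))) (adj_mat S)) (adj_mat (Id_on (C y b))) :: 'x \<Rightarrow> 'x \<Rightarrow> 'a) \<in> terwilliger_alg X d R y"
    by (intro T_mult T_E assms)
  moreover have "mprod X (mprod X (adj_mat (Id_on (C y a))) (adj_mat S)) (adj_mat (Id_on (C y b))) =
     (adj_mat (S \<inter> Jset y a b) :: 'x \<Rightarrow> 'x \<Rightarrow> 'a)"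
    unfolding blk_left[OF C_sub] blk_right[OF C_sub]
    by (intro arg_cong[where f=adj_mat]) (auto simp: Jset_def)
  ultimately show ?thesis by simp
qed

lemma T_J: "a \<le> d \<Longrightarrow> b \<le> d \<Longrightarrow> adj_mat (Jset y a b) \<in> terwilliger_alg X d R y"
proof -
  assume ab: "a \<le> d" "b \<le> d"
  have "X \<times> X \<inter> Jset y a b = Jset y a b" using Jset_sub by blast
  then show ?thesis using T_blk[OF ab T_full[of y]] by simp
qed

end


context qts begin

lemma Gr_mem: "(u,w) \<in> Gr A f \<longleftrightarrow> u \<in> A \<and> w = f u"
  by (auto simp: Gr_def)

lemma Id_on_Gr: "Id_on A = Gr A id"
  by (auto simp: Gr_def Id_on_def)

lemma mprod_Gr: assumes "A \<subseteq> X" "B \<subseteq> X" "f ` A \<subseteq> B"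
  shows "mprod X (adj_mat (Gr A f)) (adj_mat (Gr B g)) = (adj_mat (Gr A (g \<circ> f)) :: 'x \<Rightarrow> 'x \<Rightarrow> 'a::field)"
proof (rule mprod_adj_eq[OF finX])
  fix u v
  have "{w \<in> X. (u, w) \<in> Gr A f \<and> (w, v) \<in> Gr B g} = (if (u,v) \<in> Gr A (g \<circ> f) then {f u} else {})"
    using assms by (auto simp: Gr_mem)
  then show "card {w \<in> X. (u, w) \<in> Gr A f \<and> (w, v) \<in> Gr B g} = (if (u,v) \<in> Gr A (g \<circ> f) then 1 else 0)"
    by simp
qed

lemma path:
  assumes y: "y \<in> X" and ab: "(a,b) \<in> (E y)\<^sup>*" and a: "a \<le> d"
  shows "\<exists>f. bij_betw f (C y a) (C y b) \<and> (adj_mat (Gr (C y a) f) :: 'x \<Rightarrow> 'x \<Rightarrow> 'a::field) \<in> terwilliger_alg X d R y"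
  using ab
proof (induction rule: rtrancl_induct)
  case base
  have "(adj_mat (Gr (C y a) id) :: 'x \<Rightarrow> 'x \<Rightarrow> 'a::field) \<in> terwilliger_alg X d R y"
    using T_E[OF a] unfolding Id_on_Gr .
  then show ?case using bij_betw_id by blast
next
  case (step b c)
  obtain f where f: "bij_betw f (C y a) (C y b)" "(adj_mat (Gr (C y a) f) :: 'x \<Rightarrow> 'x \<Rightarrow> 'a::field) \<in> terwilliger_alg X d R y"
    using step.IH by blast
  have bc: "b \<le> d" "c \<le> d" "edge y b c" using step.hyps(2) by (auto simp: E_def)
  obtain c0 where c0: "c0 \<le> d" "\<forall>u\<in>C y b. card {v \<in> C y c. (u,v) \<in> R c0} = 1"
    "\<forall>v\<in>C y c. card {u \<in> C y b. (u,v) \<in> R c0} = 1"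
    using bc(3) unfolding edge_def by blast
  obtain g where g: "bij_betw g (C y b) (C y c)" "R c0 \<inter> (C y b \<times> C y c) = Gr (C y b) g"
    using edge_bij[OF c0] by blast
  have "(adj_mat (R c0 \<inter> Jset y b c) :: 'x \<Rightarrow> 'x \<Rightarrow> 'a::field) \<in> terwilliger_alg X d R y"
    by (rule T_blk[OF bc(1,2) T_adj[OF c0(1)]])
  then have gT: "(adj_mat (Gr (C y b) g) :: 'x \<Rightarrow> 'x \<Rightarrow> 'a::field) \<in> terwilliger_alg X d R y"
    using g(2) by (simp add: Jset_def)
  have "mprod X (adj_mat (Gr (C y a) f)) (adj_mat (Gr (C y b) g)) = (adj_mat (Gr (C y a) (g \<circ> f)) :: 'x \<Rightarrow> 'x \<Rightarrow> 'a::field)"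
    by (rule mprod_Gr[OF C_sub C_sub]) (use f(1) in \<open>simp add: bij_betw_def\<close>)
  moreover have "(mprod X (adj_mat (Gr (C y a) f)) (adj_mat (Gr (C y b) g)) :: 'x \<Rightarrow> 'x \<Rightarrow> 'a::field) \<in> terwilliger_alg X d R y"
    by (rule T_mult[OF f(2) gT])
  ultimately show ?case using bij_betw_trans[OF f(1) g(1)] by auto
qed

lemma Gr_two:
  assumes y: "y \<in> X" and a: "a \<le> d" and b: "b \<le> d" and ca: "card (C y a) = 2" and cb: "card (C y b) = 2"
    and f: "bij_betw f (C y a) (C y b)"
  shows "Gr (C y a) f = Dset y a b \<or> Gr (C y a) f = Jset y a b - Dset y a b"
proof -
  obtain za where za: "za \<noteq> rp y a" "C y a = {rp y a, za}" using two_cell[OF y a ca] by blast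
  obtain zb where zb: "zb \<noteq> rp y b" "C y b = {rp y b, zb}" using two_cell[OF y b cb] by blast
  have fa: "f (rp y a) \<in> {rp y b, zb}" "f za \<in> {rp y b, zb}" "f (rp y a) \<noteq> f za"
    using f za zb unfolding bij_betw_def inj_on_def by auto
  have G: "Gr (C y a) f = {(rp y a, f (rp y a)), (za, f za)}" using za by (auto simp: Gr_def)
  show ?thesis
  proof (cases "f (rp y a) = rp y b")
    case True
    then have "f za = zb" using fa by auto
    then have "Gr (C y a) f = Dset y a b" unfolding G using True za zb by (auto simp: Dset_def)
    then show ?thesis by blast
  next
    case False
    then have "f (rp y a) = zb" "f za = rp y b" using fa by auto
    then have "Gr (C y a) f = Jset y a b - Dset y a b" unfolding G using za zb by (auto simp: Dset_def Jset_def)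
    then show ?thesis by blast
  qed
qed

lemma T_D:
  assumes y: "y \<in> X" and a: "a \<le> d" and dl: "dl y a b"
  shows "(adj_mat (Dset y a b) :: 'x \<Rightarrow> 'x \<Rightarrow> 'a::field) \<in> terwilliger_alg X d R y"
proof -
  have ab: "(a,b) \<in> (E y)\<^sup>*" and b: "b \<le> d" using dl Es_le[OF _ a] unfolding dl_def by auto
  obtain f where f: "bij_betw f (C y a) (C y b)" "(adj_mat (Gr (C y a) f) :: 'x \<Rightarrow> 'x \<Rightarrow> 'a::field) \<in> terwilliger_alg X d R y"
    using path[OF y ab a] by blast
  have c2: "card (C y a) = 2" "card (C y b) = 2" using dl_card2[OF dl] by auto
  show ?thesis
  proof (cases "Gr (C y a) f = Dset y a b")
    case True
    then show ?thesis using f(2) by simp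
  next
    case False
    then have G: "Gr (C y a) f = Jset y a b - Dset y a b" using Gr_two[OF y a b c2 f(1)] by blast
    have "Dset y a b = Jset y a b - Gr (C y a) f" unfolding G using Dset_sub by blast
    moreover have "Gr (C y a) f \<subseteq> Jset y a b" unfolding G by blast
    ultimately have "(adj_mat (Dset y a b) :: 'x \<Rightarrow> 'x \<Rightarrow> 'a::field) = adj_mat (Jset y a b) - adj_mat (Gr (C y a) f)"
      by (simp add: adj_mat_diff)
    then show ?thesis using mv.subspace_diff[OF T_sub T_J[OF a b] f(2)] by simp
  qed
qed

definition G0 :: "'x \<Rightarrow> ('x \<Rightarrow> 'x \<Rightarrow> 'a::field) set" where
  "G0 y = (\<lambda>(a,b). adj_mat (Jset y a b)) ` ({..d} \<times> {..d}) \<union>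
          (\<lambda>(a,b). adj_mat (Dset y a b)) ` {(a,b). a \<le> d \<and> b \<le> d \<and> dl y a b}"

lemma G0_T: "y \<in> X \<Longrightarrow> G0 y \<subseteq> terwilliger_alg X d R y"
  unfolding G0_def using T_J T_D by auto

end


context qts begin

lemma half: assumes "y \<in> X" "b \<le> d" "card (C y b) = 2"
  shows "card {w \<in> C y b. (w = rp y b) = P} = 1"
proof -
  obtain z where z: "z \<noteq> rp y b" "C y b = {rp y b, z}" using two_cell[OF assms] by blast
  have "{w \<in> C y b. (w = rp y b) = P} = (if P then {rp y b} else {z})" using z by auto
  then show ?thesis by simp
qed

lemma prod_mismatch:
  assumes "b \<noteq> c" "b \<le> d" "c \<le> d" "S1 \<subseteq> UNIV \<times> C y b" "S2 \<subseteq> C y c \<times> UNIV"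
  shows "mprod X (adj_mat S1) (adj_mat S2) = (0 :: 'x \<Rightarrow> 'x \<Rightarrow> 'a::field)"
proof -
  have "mprod X (adj_mat S1) (adj_mat S2) = (adj_mat {} :: 'x \<Rightarrow> 'x \<Rightarrow> 'a::field)"
  proof (rule mprod_adj_eq[OF finX])
    fix u v
    have E: "{w \<in> X. (u, w) \<in> S1 \<and> (w, v) \<in> S2} = {}"
      using assms C_disj by blast
    show "card {w \<in> X. (u, w) \<in> S1 \<and> (w, v) \<in> S2} = (if (u, v) \<in> {} then 1 else 0)" unfolding E by simp
  qed
  then show ?thesis by (simp add: adj_mat_empty)
qed

lemma prod_JJ: "mprod X (adj_mat (Jset y a b)) (adj_mat (Jset y b e)) =
   mscale (of_nat (card (C y b))) (adj_mat (Jset y a e) :: 'x \<Rightarrow> 'x \<Rightarrow> 'a::field)"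
proof (intro ext)
  fix u v
  have "{w \<in> X. (u, w) \<in> Jset y a b \<and> (w, v) \<in> Jset y b e} = (if (u,v) \<in> Jset y a e then C y b else {})"
    using C_sub by (auto simp: Jset_def)
  then show "mprod X (adj_mat (Jset y a b)) (adj_mat (Jset y b e)) u v =
   mscale (of_nat (card (C y b))) (adj_mat (Jset y a e) :: 'x \<Rightarrow> 'x \<Rightarrow> 'a::field) u v"
    unfolding mprod_adj[OF finX] by (simp add: mscale_def adj_mat_app)
qed

lemma prod_JD: assumes y: "y \<in> X" and b: "b \<le> d" and dl: "dl y b e"
  shows "mprod X (adj_mat (Jset y a b)) (adj_mat (Dset y b e)) = (adj_mat (Jset y a e) :: 'x \<Rightarrow> 'x \<Rightarrow> 'a::field)"
proof (rule mprod_adj_eq[OF finX])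
  fix u v
  have "{w \<in> X. (u, w) \<in> Jset y a b \<and> (w, v) \<in> Dset y b e} =
     (if (u,v) \<in> Jset y a e then {w \<in> C y b. (w = rp y b) = (v = rp y e)} else {})"
    using C_sub by (auto simp: Jset_def Dset_def)
  then show "card {w \<in> X. (u, w) \<in> Jset y a b \<and> (w, v) \<in> Dset y b e} = (if (u,v) \<in> Jset y a e then 1 else 0)"
    using half[OF y b] dl_card2[OF dl] by simp
qed

lemma prod_DJ: assumes y: "y \<in> X" and a: "a \<le> d" and dl: "dl y a b"
  shows "mprod X (adj_mat (Dset y a b)) (adj_mat (Jset y b e)) = (adj_mat (Jset y a e) :: 'x \<Rightarrow> 'x \<Rightarrow> 'a::field)"
proof (rule mprod_adj_eq[OF finX])
  fix u v
  have b: "b \<le> d" using dl Es_le[OF _ a] unfolding dl_def by auto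
  have "{w \<in> X. (u, w) \<in> Dset y a b \<and> (w, v) \<in> Jset y b e} =
     (if (u,v) \<in> Jset y a e then {w \<in> C y b. (w = rp y b) = (u = rp y a)} else {})"
    using C_sub by (auto simp: Jset_def Dset_def)
  then show "card {w \<in> X. (u, w) \<in> Dset y a b \<and> (w, v) \<in> Jset y b e} = (if (u,v) \<in> Jset y a e then 1 else 0)"
    using half[OF y b] dl_card2[OF dl] by simp
qed

lemma prod_DD: assumes y: "y \<in> X" and a: "a \<le> d" and dl: "dl y a b" "dl y b e"
  shows "mprod X (adj_mat (Dset y a b)) (adj_mat (Dset y b e)) = (adj_mat (Dset y a e) :: 'x \<Rightarrow> 'x \<Rightarrow> 'a::field)"
proof (rule mprod_adj_eq[OF finX])
  fix u v
  have b: "b \<le> d" using dl Es_le[OF _ a] unfolding dl_def by auto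
  have "{w \<in> X. (u, w) \<in> Dset y a b \<and> (w, v) \<in> Dset y b e} =
     (if (u,v) \<in> Dset y a e then {w \<in> C y b. (w = rp y b) = (v = rp y e)} else {})"
    using C_sub by (auto simp: Dset_def)
  then show "card {w \<in> X. (u, w) \<in> Dset y a b \<and> (w, v) \<in> Dset y b e} = (if (u,v) \<in> Dset y a e then 1 else 0)"
    using half[OF y b] dl_card2[OF dl(1)] by simp
qed

lemma J_G0: "a \<le> d \<Longrightarrow> b \<le> d \<Longrightarrow> adj_mat (Jset y a b) \<in> G0 y"
  unfolding G0_def by auto
lemma D_G0: "a \<le> d \<Longrightarrow> b \<le> d \<Longrightarrow> dl y a b \<Longrightarrow> adj_mat (Dset y a b) \<in> G0 y"
  unfolding G0_def by auto

lemma Jset_side: "Jset y a b \<subseteq> UNIV \<times> C y b" "Jset y a b \<subseteq> C y a \<times> UNIV"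
  by (auto simp: Jset_def)
lemma Dset_side: "Dset y a b \<subseteq> UNIV \<times> C y b" "Dset y a b \<subseteq> C y a \<times> UNIV"
  by (auto simp: Dset_def)

lemma prodG0: assumes y: "y \<in> X" and x: "x \<in> G0 y" and z: "z \<in> G0 y"
  shows "mprod X x z \<in> mv.span (G0 y)"
proof -
  obtain a b S where xS: "x = adj_mat S" "a \<le> d" "b \<le> d"
    "(S = Jset y a b) \<or> (S = Dset y a b \<and> dl y a b)"
    using x unfolding G0_def by auto
  obtain c e S' where zS: "z = adj_mat S'" "c \<le> d" "e \<le> d"
    "(S' = Jset y c e) \<or> (S' = Dset y c e \<and> dl y c e)"
    using z unfolding G0_def by auto
  show ?thesis
  proof (cases "b = c")
    case False
    have "S \<subseteq> UNIV \<times> C y b" "S' \<subseteq> C y c \<times> UNIV" using xS(4) zS(4) by (auto simp: Jset_def Dset_def)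
    then have "mprod X x z = 0" unfolding xS(1) zS(1) by (rule prod_mismatch[OF False xS(3) zS(2)])
    then show ?thesis by (simp add: mv.span_zero)
  next
    case True
    show ?thesis
    proof (cases "S = Jset y a b")
      case SJ: True
      show ?thesis
      proof (cases "S' = Jset y c e")
        case True
        have "mprod X x z = mscale (of_nat (card (C y b))) (adj_mat (Jset y a e))"
          unfolding xS(1) zS(1) SJ True \<open>b = c\<close> by (rule prod_JJ)
        then show ?thesis using mv.span_scale[OF mv.span_base[OF J_G0[OF xS(2) zS(3)]]] by simp
      next
        case False
        then have D: "S' = Dset y c e" "dl y c e" using zS(4) by auto
        have "mprod X x z = adj_mat (Jset y a e)"
          unfolding xS(1) zS(1) SJ D(1) \<open>b = c\<close> by (rule prod_JD[OF y zS(2) D(2)])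
        then show ?thesis using mv.span_base[OF J_G0[OF xS(2) zS(3)]] by simp
      qed
    next
      case SD: False
      then have SD: "S = Dset y a b" "dl y a b" using xS(4) by auto
      show ?thesis
      proof (cases "S' = Jset y c e")
        case True
        have "mprod X x z = adj_mat (Jset y a e)"
          unfolding xS(1) zS(1) SD(1) True \<open>b = c\<close>[symmetric] by (rule prod_DJ[OF y xS(2) SD(2)])
        then show ?thesis using mv.span_base[OF J_G0[OF xS(2) zS(3)]] by simp
      next
        case False
        then have D: "S' = Dset y c e" "dl y c e" using zS(4) by auto
        have dl2: "dl y b e" using D(2) \<open>b = c\<close> by simp
        have "mprod X x z = adj_mat (Dset y a e)"
          unfolding xS(1) zS(1) SD(1) D(1) \<open>b = c\<close>[symmetric] by (rule prod_DD[OF y xS(2) SD(2) dl2])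
        then show ?thesis using mv.span_base[OF D_G0[OF xS(2) zS(3) dl_trans[OF SD(2) dl2]]] by simp
      qed
    qed
  qed
qed

end


context qts begin

lemma blk_span:
  assumes y: "y \<in> X" and a: "a \<le> d" and b: "b \<le> d" and c: "c \<le> d"
  shows "(adj_mat (R c \<inter> Jset y a b) :: 'x \<Rightarrow> 'x \<Rightarrow> 'a::field) \<in> mv.span (G0 y)"
proof -
  obtain u0 where u0: "u0 \<in> C y a" using C_ne[OF y a] by blast
  obtain v0 where v0: "v0 \<in> C y b" using C_ne[OF y b] by blast
  define r where "r = card {v \<in> C y b. (u0,v) \<in> R c}"
  define s where "s = card {u \<in> C y a. (u,v0) \<in> R c}"
  have rows: "card {v \<in> C y b. (u,v) \<in> R c} = r" if uu: "u \<in> C y a" for u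
    using rowc_indep[OF a b c u0 uu] unfolding r_def by simp
  have cols: "card {u \<in> C y a. (u,v) \<in> R c} = s" if vv: "v \<in> C y b" for v
    using colc_indep[OF a b c v0 vv] unfolding s_def by simp
  have r_le: "r \<le> card (C y b)" unfolding r_def by (rule card_mono[OF C_fin]) auto
  have s_le: "s \<le> card (C y a)" unfolding s_def by (rule card_mono[OF C_fin]) auto
  have finr: "finite {v \<in> C y b. (u,v) \<in> R c}" for u using C_fin by simp
  have fins: "finite {u \<in> C y a. (u,v) \<in> R c}" for v using C_fin by simp
  have ca: "card (C y a) \<le> 2" "card (C y b) \<le> 2" using card_C_le2[OF y a] card_C_le2[OF y b] by auto
  consider "r = 0" | "s = 0" | "r = card (C y b)" | "s = card (C y a)"
    | "r = 1" "s = 1" "card (C y a) = 2" "card (C y b) = 2"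
    using r_le s_le ca by linarith
  then show ?thesis
  proof cases
    case 1
    have "R c \<inter> Jset y a b = {}"
    proof (rule ccontr)
      assume "R c \<inter> Jset y a b \<noteq> {}"
      then obtain u v where uv: "(u,v) \<in> R c" "u \<in> C y a" "v \<in> C y b" by (auto simp: Jset_def)
      then have "{v \<in> C y b. (u,v) \<in> R c} \<noteq> {}" by auto
      then show False using rows[OF uv(2)] 1 finr[of u] by auto
    qed
    then show ?thesis by (simp add: adj_mat_empty mv.span_zero)
  next
    case 2
    have "R c \<inter> Jset y a b = {}"
    proof (rule ccontr)
      assume "R c \<inter> Jset y a b \<noteq> {}"
      then obtain u v where uv: "(u,v) \<in> R c" "u \<in> C y a" "v \<in> C y b" by (auto simp: Jset_def)
      then have "{u \<in> C y a. (u,v) \<in> R c} \<noteq> {}" by auto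
      then show False using cols[OF uv(3)] 2 fins[of v] by auto
    qed
    then show ?thesis by (simp add: adj_mat_empty mv.span_zero)
  next
    case 3
    have "{v \<in> C y b. (u,v) \<in> R c} = C y b" if uu: "u \<in> C y a" for u
      using rows[OF uu] 3 C_fin by (intro card_subset_eq) auto
    then have "R c \<inter> Jset y a b = Jset y a b" by (auto simp: Jset_def)
    then show ?thesis using mv.span_base[OF J_G0[OF a b]] by simp
  next
    case 4
    have "{u \<in> C y a. (u,v) \<in> R c} = C y a" if vv: "v \<in> C y b" for v
      using cols[OF vv] 4 C_fin by (intro card_subset_eq) auto
    then have "R c \<inter> Jset y a b = Jset y a b" by (auto simp: Jset_def)
    then show ?thesis using mv.span_base[OF J_G0[OF a b]] by simp
  next
    case 5
    have e1: "\<forall>u\<in>C y a. card {v \<in> C y b. (u,v) \<in> R c} = 1" using rows 5 by simp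
    have e2: "\<forall>v\<in>C y b. card {u \<in> C y a. (u,v) \<in> R c} = 1" using cols 5 by simp
    obtain f where f: "bij_betw f (C y a) (C y b)" "R c \<inter> (C y a \<times> C y b) = Gr (C y a) f"
      using edge_bij[OF c e1 e2] by blast
    have "edge y a b" unfolding edge_def using c e1 e2 by blast
    then have "(a,b) \<in> E y" using a b by (simp add: E_def)
    then have dl: "dl y a b" using 5 unfolding dl_def by auto
    have S: "R c \<inter> Jset y a b = Gr (C y a) f" using f(2) by (simp add: Jset_def)
    show ?thesis
    proof (cases "Gr (C y a) f = Dset y a b")
      case True
      then show ?thesis using S mv.span_base[OF D_G0[OF a b dl]] by simp
    next
      case False
      then have "Gr (C y a) f = Jset y a b - Dset y a b" using Gr_two[OF y a b 5(3,4) f(1)] by blast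
      then have "(adj_mat (R c \<inter> Jset y a b) :: 'x \<Rightarrow> 'x \<Rightarrow> 'a) = adj_mat (Jset y a b) - adj_mat (Dset y a b)"
        using S by (simp add: adj_mat_diff[OF Dset_sub])
      then show ?thesis
        using mv.span_diff[OF mv.span_base[OF J_G0[OF a b]] mv.span_base[OF D_G0[OF a b dl]]] by simp
    qed
  qed
qed

lemma decomp:
  assumes y: "y \<in> X" and S: "S \<subseteq> X \<times> X"
  shows "(adj_mat S :: 'x \<Rightarrow> 'x \<Rightarrow> 'a::field) = (\<Sum>a\<in>{..d}. \<Sum>b\<in>{..d}. adj_mat (S \<inter> Jset y a b))"
proof (intro ext)
  fix u v
  show "(adj_mat S :: 'x \<Rightarrow> 'x \<Rightarrow> 'a::field) u v = (\<Sum>a\<in>{..d}. \<Sum>b\<in>{..d}. adj_mat (S \<inter> Jset y a b)) u v"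
  proof (cases "(u,v) \<in> S")
    case True
    then have uv: "u \<in> X" "v \<in> X" using S by auto
    obtain a0 where a0: "a0 \<le> d" "u \<in> C y a0" using C_ex[OF y uv(1)] by blast
    obtain b0 where b0: "b0 \<le> d" "v \<in> C y b0" using C_ex[OF y uv(2)] by blast
    have "(\<Sum>a\<in>{..d}. \<Sum>b\<in>{..d}. (adj_mat (S \<inter> Jset y a b) :: 'x \<Rightarrow> 'x \<Rightarrow> 'a::field)) u v
        = (\<Sum>a\<in>{..d}. \<Sum>b\<in>{..d}. (if a = a0 then if b = b0 then 1 else 0 else 0))"
      unfolding sum_fun_apply
    proof (intro sum.cong refl)
      fix a b assume ab: "a \<in> {..d}" "b \<in> {..d}"
      show "(adj_mat (S \<inter> Jset y a b) :: 'x \<Rightarrow> 'x \<Rightarrow> 'a::field) u v = (if a = a0 then if b = b0 then 1 else 0 else 0)"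
      proof -
        have ia: "u \<in> C y a \<longleftrightarrow> a = a0" using C_disj[of a a0 u y] a0 ab by auto
        have ib: "v \<in> C y b \<longleftrightarrow> b = b0" using C_disj[of b b0 v y] b0 ab by auto
        have "(u,v) \<in> S \<inter> Jset y a b \<longleftrightarrow> a = a0 \<and> b = b0" using ia ib True by (simp add: Jset_def)
        then show ?thesis by (simp add: adj_mat_app)
      qed
    qed
    also have "\<dots> = (\<Sum>a\<in>{..d}. if a = a0 then (1::'a) else 0)"
      by (intro sum.cong refl) (use b0(1) in auto)
    also have "\<dots> = 1" using a0(1) by simp
    finally show ?thesis using True by (simp add: adj_mat_app)
  next
    case False
    then show ?thesis by (simp add: sum_fun_apply adj_mat_app)
  qed
qed

lemma adj_span: assumes y: "y \<in> X" and c: "c \<le> d" shows "(adj_mat (R c) :: 'x \<Rightarrow> 'x \<Rightarrow> 'a::field) \<in> mv.span (G0 y)"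
  unfolding decomp[OF y R_sub[OF c]]
  by (intro mv.span_sum blk_span[OF y _ _ c]) auto

lemma E_span: assumes y: "y \<in> X" and a: "a \<le> d" shows "(adj_mat (Id_on (C y a)) :: 'x \<Rightarrow> 'x \<Rightarrow> 'a::field) \<in> mv.span (G0 y)"
proof (cases "card (C y a) = 1")
  case True
  have "Id_on (C y a) = Jset y a a" using one_cell[OF True] by (auto simp: Jset_def)
  then show ?thesis using mv.span_base[OF J_G0[OF a a]] by simp
next
  case False
  then have c2: "card (C y a) = 2" using card12[OF y a] by simp
  then have dl: "dl y a a" by (simp add: dl_def)
  obtain z where z: "z \<noteq> rp y a" "C y a = {rp y a, z}" using two_cell[OF y a c2] by blast
  have "Id_on (C y a) = Dset y a a" using z by (auto simp: Dset_def Id_on_def)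
  then show ?thesis using mv.span_base[OF D_G0[OF a a dl]] by simp
qed

lemma T_span: fixes x :: "'x \<Rightarrow> 'x \<Rightarrow> 'a::field" assumes y: "y \<in> X" and x: "x \<in> terwilliger_alg X d R y" shows "x \<in> mv.span (G0 y)"
  using x unfolding terwilliger_alg_def
proof (induction rule: gen_alg.induct)
  case (gen M)
  then consider a where "a \<le> d" "M = adj_mat (R a)" | a where "a \<le> d" "M = dual_idem (R a) y" by auto
  then show ?case
  proof cases
    case 1
    then show ?thesis using adj_span[OF y 1(1)] by simp
  next
    case 2
    then have "M = adj_mat (Id_on (C y a))" using dual_idem_eq[OF 2(1)] by simp
    then show ?thesis using E_span[OF y 2(1)] by simp
  qed
next
  case zero
  then show ?case using mv.span_zero by (simp add: zero_fun_def)
next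
  case one
  have "(\<lambda>u v. if u = v \<and> u \<in> X then 1 else 0) = (adj_mat (R 0) :: 'x \<Rightarrow> 'x \<Rightarrow> 'a)"
    unfolding R0 by (auto simp: adj_mat_def fun_eq_iff)
  then show ?case using adj_span[OF y, of 0] by simp
next
  case (add M N)
  have "(\<lambda>u v. M u v + N u v) = (M + N :: 'x \<Rightarrow> 'x \<Rightarrow> 'a)" by (simp add: fun_eq_iff)
  then show ?case using mv.span_add[OF add.IH] by simp
next
  case (smult M c)
  then show ?case using mv.span_scale by blast
next
  case (mult M N)
  then show ?case using span_mprod_closed prodG0[OF y] by blast
qed

end


context qts begin

definition kap :: "'x \<Rightarrow> nat \<times> nat \<times> bool \<Rightarrow> ('x \<times> 'x) set" where
  "kap y i = (case i of (a,b,t) \<Rightarrow> if dl y a b then (if t then Dset y a b else Jset y a b - Dset y a b) else Jset y a b)"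

lemma kap_sub: "kap y (a,b,t) \<subseteq> Jset y a b"
  using Dset_sub by (auto simp: kap_def)

lemma kap_ne: assumes y: "y \<in> X" and i: "(a,b,t) \<in> Idx y" shows "kap y (a,b,t) \<noteq> {}"
proof -
  have a: "a \<le> d" and b: "b \<le> d" using i by (auto simp: Idx_def)
  show ?thesis
  proof (cases "dl y a b")
    case False
    then show ?thesis using C_ne[OF y a] C_ne[OF y b] by (simp add: kap_def Jset_def)
  next
    case True
    show ?thesis
    proof (cases t)
      case True
      have "(rp y a, rp y b) \<in> Dset y a b" using rp_in[OF y a] rp_in[OF y b] by (simp add: Dset_def)
      then show ?thesis using \<open>dl y a b\<close> True by (auto simp: kap_def)
    next
      case False
      obtain z where z: "z \<noteq> rp y b" "C y b = {rp y b, z}" using two_cell[OF y b] dl_card2[OF \<open>dl y a b\<close>] by blast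
      have "(rp y a, z) \<in> Jset y a b - Dset y a b" using rp_in[OF y a] z by (auto simp: Dset_def Jset_def)
      then show ?thesis using \<open>dl y a b\<close> False by (auto simp: kap_def)
    qed
  qed
qed

lemma kap_disj: assumes i: "i \<in> Idx y" and j: "j \<in> Idx y" and ij: "i \<noteq> j"
  shows "kap y i \<inter> kap y j = {}"
proof -
  obtain a b t where it: "i = (a,b,t)" by (cases i) auto
  obtain a' b' t' where jt: "j = (a',b',t')" by (cases j) auto
  have le: "a \<le> d" "b \<le> d" "a' \<le> d" "b' \<le> d" using i j it jt by (auto simp: Idx_def)
  show ?thesis
  proof (cases "(a,b) = (a',b')")
    case False
    then show ?thesis using Jset_disj[OF le False, of y] kap_sub[of y a b t] kap_sub[of y a' b' t'] it jt by blast
  next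
    case True
    then have eq: "a' = a" "b' = b" "t \<noteq> t'" using ij it jt by auto
    have "dl y a b" using i j it jt eq by (cases t) (auto simp: Idx_def)
    then show ?thesis using it jt eq by (cases t) (auto simp: kap_def)
  qed
qed

lemma kap_inj: assumes y: "y \<in> X" shows "inj_on (kap y) (Idx y)"
proof (rule inj_onI)
  fix i j assume ij: "i \<in> Idx y" "j \<in> Idx y" "kap y i = kap y j"
  show "i = j"
  proof (rule ccontr)
    assume "i \<noteq> j"
    then have "kap y i \<inter> kap y j = {}" using kap_disj ij by blast
    moreover obtain a b t where "i = (a,b,t)" by (cases i) auto
    ultimately show False using kap_ne[OF y] ij by auto
  qed
qed

definition B :: "'x \<Rightarrow> ('x \<Rightarrow> 'x \<Rightarrow> 'a::field) set" where
  "B y = adj_mat ` kap y ` Idx y"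

lemma B_indep: assumes y: "y \<in> X" shows "mv.independent (B y)"
  unfolding B_def
proof (rule indep_adj)
  show "finite (kap y ` Idx y)" using Idx_fin by simp
  show "S \<noteq> {}" if "S \<in> kap y ` Idx y" for S
    using that kap_ne[OF y] by auto
  show "S \<inter> S' = {}" if "S \<in> kap y ` Idx y" "S' \<in> kap y ` Idx y" "S \<noteq> S'" for S S'
    using that kap_disj by blast
qed

lemma card_B: assumes y: "y \<in> X" shows "card (B y) = card (Idx y)"
proof -
  have "card (B y) = card (kap y ` Idx y)" unfolding B_def
    by (rule card_image[OF inj_on_subset[OF adj_mat_inj subset_UNIV]])
  also have "\<dots> = card (Idx y)" by (rule card_image[OF kap_inj[OF y]])
  finally show ?thesis .
qed

lemma B_span_G0: assumes y: "y \<in> X" shows "B y \<subseteq> mv.span (G0 y)"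
proof
  fix x assume "x \<in> B y"
  then obtain a b t where i: "(a,b,t) \<in> Idx y" and x: "x = adj_mat (kap y (a,b,t))" unfolding B_def by auto
  have a: "a \<le> d" and b: "b \<le> d" using i by (auto simp: Idx_def)
  show "x \<in> mv.span (G0 y)"
  proof (cases "dl y a b")
    case False
    then show ?thesis using x mv.span_base[OF J_G0[OF a b]] by (simp add: kap_def)
  next
    case dl: True
    show ?thesis
    proof (cases t)
      case True
      then show ?thesis using x dl mv.span_base[OF D_G0[OF a b dl]] by (simp add: kap_def)
    next
      case False
      then have "x = adj_mat (Jset y a b) - adj_mat (Dset y a b)"
        using x dl by (simp add: kap_def adj_mat_diff[OF Dset_sub])
      then show ?thesis
        using mv.span_diff[OF mv.span_base[OF J_G0[OF a b]] mv.span_base[OF D_G0[OF a b dl]]] by simp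
    qed
  qed
qed

lemma G0_span_B: assumes y: "y \<in> X" shows "G0 y \<subseteq> mv.span (B y)"
proof
  fix x assume x: "x \<in> G0 y"
  have inB: "adj_mat (kap y (a,b,t)) \<in> B y" if "(a,b,t) \<in> Idx y" for a b t
    using that unfolding B_def by blast
  from x consider a b where "a \<le> d" "b \<le> d" "x = adj_mat (Jset y a b)"
    | a b where "a \<le> d" "b \<le> d" "dl y a b" "x = adj_mat (Dset y a b)"
    unfolding G0_def by auto
  then show "x \<in> mv.span (B y)"
  proof cases
    case 1
    show ?thesis
    proof (cases "dl y a b")
      case False
      then have i: "(a,b,False) \<in> Idx y" using 1 by (simp add: Idx_def)
      have "kap y (a,b,False) = Jset y a b" using False by (simp add: kap_def)
      then show ?thesis using mv.span_base[OF inB[OF i]] 1(3) by simp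
    next
      case True
      then have i: "(a,b,False) \<in> Idx y" "(a,b,True) \<in> Idx y" using 1 by (auto simp: Idx_def)
      have U: "Jset y a b = Dset y a b \<union> (Jset y a b - Dset y a b)" using Dset_sub by blast
      have k: "kap y (a,b,True) = Dset y a b" "kap y (a,b,False) = Jset y a b - Dset y a b"
        using True by (simp_all add: kap_def)
      have D: "Dset y a b \<inter> (Jset y a b - Dset y a b) = {}" by blast
      have "x = adj_mat (Jset y a b)" by (rule 1(3))
      also have "\<dots> = adj_mat (Dset y a b \<union> (Jset y a b - Dset y a b))" using U by (rule arg_cong)
      also have "\<dots> = adj_mat (kap y (a,b,True)) + adj_mat (kap y (a,b,False))"
        unfolding k by (rule adj_mat_union[OF D])
      finally have "x = adj_mat (kap y (a,b,True)) + adj_mat (kap y (a,b,False))" .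
      then show ?thesis using mv.span_add[OF mv.span_base[OF inB[OF i(2)]] mv.span_base[OF inB[OF i(1)]]] by simp
    qed
  next
    case 2
    then have i: "(a,b,True) \<in> Idx y" by (simp add: Idx_def)
    have "kap y (a,b,True) = Dset y a b" using 2 by (simp add: kap_def)
    then show ?thesis using mv.span_base[OF inB[OF i]] 2 by simp
  qed
qed

lemma dim_T: assumes y: "y \<in> X"
  shows "mv.dim (terwilliger_alg X d R y :: ('x \<Rightarrow> 'x \<Rightarrow> 'a::field) set) = card (Idx y)"
proof -
  have T: "mv.span (G0 y) = (terwilliger_alg X d R y :: ('x \<Rightarrow> 'x \<Rightarrow> 'a::field) set)"
    by (rule mv.span_subspace[OF G0_T[OF y] _ T_sub]) (use T_span[OF y] in blast)
  have S: "mv.span (G0 y) = (mv.span (B y) :: ('x \<Rightarrow> 'x \<Rightarrow> 'a::field) set)"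
    using mv.span_eq B_span_G0[OF y] G0_span_B[OF y] by blast
  have "mv.dim (terwilliger_alg X d R y :: ('x \<Rightarrow> 'x \<Rightarrow> 'a::field) set) = mv.dim (mv.span (B y) :: ('x \<Rightarrow> 'x \<Rightarrow> 'a::field) set)"
    using T S by simp
  also have "\<dots> = card (B y :: ('x \<Rightarrow> 'x \<Rightarrow> 'a::field) set)"
    by (rule mv.dim_span_eq_card_independent[OF B_indep[OF y]])
  also have "\<dots> = card (Idx y)" by (rule card_B[OF y])
  finally show ?thesis .
qed

end

theorem corollary4p7:
  fixes X :: "'x set" and d :: nat and R :: "nat \<Rightarrow> ('x \<times> 'x) set" and y1 y2 :: 'x
  assumes "is_scheme X d R" and "quasi_thin X d R" and "y1 \<in> X" and "y2 \<in> X"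
  shows "vector_space.dim (mscale :: 'a::field \<Rightarrow> _)
           (terwilliger_alg X d R y1 :: ('x \<Rightarrow> 'x \<Rightarrow> 'a) set)
       = vector_space.dim (mscale :: 'b::field \<Rightarrow> _)
           (terwilliger_alg X d R y2 :: ('x \<Rightarrow> 'x \<Rightarrow> 'b) set)"
proof -
  interpret q: qts X d R using assms(1,2) by unfold_locales
  have "mv.dim (terwilliger_alg X d R y1 :: ('x \<Rightarrow> 'x \<Rightarrow> 'a) set) = card (q.Idx y1)"
    by (rule q.dim_T[OF assms(3)])
  also have "\<dots> = card (q.Idx y2)" using q.Idx_indep[OF assms(3,4)] by simp
  also have "\<dots> = mv.dim (terwilliger_alg X d R y2 :: ('x \<Rightarrow> 'x \<Rightarrow> 'b) set)"
    by (rule q.dim_T[OF assms(4), symmetric])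
  finally show ?thesis .
qed

end
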